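(* Let $\Delta$ be a thick spherical building with a chosen point $n\in\Delta$, let $\sigma$ be a simplex of $\Delta$ and $C$ a chamber containing $\sigma$. Then $\sigma$ lies in the horizontal part $\Delta^h$ if and only if every vertex $v$ of $C$ for which there is a path in the Coxeter diagram of $\Delta$ from the type of $v$ to the type of some vertex of $\sigma$ is equatorial.
   Context: $\Delta$ carries the CAT(1) angular metric $d$ (apartments are unit spheres). A point $x$ is equatorial if $d(n,x)=\pi/2$; a simplex is equatorial if all its points are. $\Delta$ decomposes as a spherical join $\ast_i\Delta_i$ of irreducible spherical buildings; the horizontal part $\Delta^h$ is the join of those factors $\Delta_i$ consisting entirely of equatorial points, and the vertical part $\Delta^v$ is the join of the remaining factors. Paths in the Coxeter diagram include the trivial path. *)

theory Defs
  imports "HOL-Analysis.Analysis"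
begin

text \<open>
Spherical buildings are encoded via the W-metric (Weyl distance) definition of
Abramenko--Brown, Def. 5.1, over a finite (spherical) Coxeter system given by its
geometric (reflection) representation: unit simple roots alpha s (s ranging over
the finite type set 's) forming a basis of real^'n with
alpha s . alpha t = - cos (pi / m s t), where m is the Coxeter matrix.
\<close>

definition refl :: "real^'n \<Rightarrow> real^'n \<Rightarrow> real^'n" where
  "refl a x = x - (2 * (x \<bullet> a)) *\<^sub>R a"

definition coxeter_roots :: "('s::finite \<Rightarrow> real^'n) \<Rightarrow> ('s \<Rightarrow> 's \<Rightarrow> nat) \<Rightarrow> bool" where
  "coxeter_roots \<alpha> m \<longleftrightarrow>
     (\<forall>s. norm (\<alpha> s) = 1) \<and> (\<forall>s. m s s = 1) \<and> (\<forall>s t. m s t = m t s) \<and>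
     (\<forall>s t. s \<noteq> t \<longrightarrow> m s t \<ge> 2) \<and>
     (\<forall>s t. \<alpha> s \<bullet> \<alpha> t = - cos (pi / real (m s t))) \<and>
     inj \<alpha> \<and> independent (range \<alpha>) \<and> span (range \<alpha>) = UNIV"

definition wprod :: "('s \<Rightarrow> real^'n) \<Rightarrow> 's list \<Rightarrow> (real^'n \<Rightarrow> real^'n)" where
  "wprod \<alpha> ws = foldr (\<lambda>s f. refl (\<alpha> s) \<circ> f) ws id"

definition Wgrp :: "('s \<Rightarrow> real^'n) \<Rightarrow> (real^'n \<Rightarrow> real^'n) set" where
  "Wgrp \<alpha> = range (wprod \<alpha>)"

definition wlen :: "('s \<Rightarrow> real^'n) \<Rightarrow> (real^'n \<Rightarrow> real^'n) \<Rightarrow> nat" where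
  "wlen \<alpha> w = (LEAST k. \<exists>ws. length ws = k \<and> wprod \<alpha> ws = w)"

definition is_W_building ::
  "('s \<Rightarrow> real^'n) \<Rightarrow> ('c \<Rightarrow> 'c \<Rightarrow> (real^'n \<Rightarrow> real^'n)) \<Rightarrow> bool" where
  "is_W_building \<alpha> \<delta> \<longleftrightarrow>
     (\<forall>C D. \<delta> C D \<in> Wgrp \<alpha>) \<and>
     (\<forall>C D. \<delta> C D = id \<longleftrightarrow> C = D) \<and>
     (\<forall>C D C' s. \<delta> C' C = refl (\<alpha> s) \<longrightarrow>
        (\<delta> C' D = refl (\<alpha> s) \<circ> \<delta> C D \<or> \<delta> C' D = \<delta> C D) \<and>
        (wlen \<alpha> (refl (\<alpha> s) \<circ> \<delta> C D) = wlen \<alpha> (\<delta> C D) + 1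
           \<longrightarrow> \<delta> C' D = refl (\<alpha> s) \<circ> \<delta> C D)) \<and>
     (\<forall>C D s. \<exists>C'. \<delta> C' C = refl (\<alpha> s) \<and> \<delta> C' D = refl (\<alpha> s) \<circ> \<delta> C D)"

text \<open>Thick: every panel contains at least three chambers.\<close>
definition thick ::
  "('s \<Rightarrow> real^'n) \<Rightarrow> ('c \<Rightarrow> 'c \<Rightarrow> (real^'n \<Rightarrow> real^'n)) \<Rightarrow> bool" where
  "thick \<alpha> \<delta> \<longleftrightarrow>
     (\<forall>C s. \<exists>D D'. D \<noteq> D' \<and> \<delta> C D = refl (\<alpha> s) \<and> \<delta> C D' = refl (\<alpha> s))"

text \<open>Closed fundamental chamber K of the Coxeter sphere.\<close>
definition fund :: "('s \<Rightarrow> real^'n) \<Rightarrow> real^'n \<Rightarrow> bool" where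
  "fund \<alpha> x \<longleftrightarrow> norm x = 1 \<and> (\<forall>s. 0 \<le> x \<bullet> \<alpha> s)"

text \<open>Points of the geometric realisation are represented by pairs (C, x) with x in K
  (the point x of chamber C); the angular metric is computed in an apartment
  containing C and D, identified with the Coxeter sphere so that C goes to K and D
  to delta C D applied to K.\<close>
definition angd ::
  "('c \<Rightarrow> 'c \<Rightarrow> (real^'n \<Rightarrow> real^'n)) \<Rightarrow> ('c \<times> (real^'n)) \<Rightarrow> ('c \<times> (real^'n)) \<Rightarrow> real" where
  "angd \<delta> p q = arccos (snd p \<bullet> \<delta> (fst p) (fst q) (snd q))"

definition equatorial ::
  "('c \<Rightarrow> 'c \<Rightarrow> (real^'n \<Rightarrow> real^'n)) \<Rightarrow> ('c \<times> (real^'n)) \<Rightarrow> ('c \<times> (real^'n)) \<Rightarrow> bool" where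
  "equatorial \<delta> n p \<longleftrightarrow> angd \<delta> n p = pi / 2"

text \<open>Points of the face of type T of chamber C (the simplex spanned by the vertices
  of C whose types lie in T).\<close>
definition face_pts :: "('s \<Rightarrow> real^'n) \<Rightarrow> 'c \<Rightarrow> 's set \<Rightarrow> ('c \<times> (real^'n)) set" where
  "face_pts \<alpha> C T = {(C, x) | x. fund \<alpha> x \<and> (\<forall>t. t \<notin> T \<longrightarrow> x \<bullet> \<alpha> t = 0)}"

text \<open>Points of the subcomplex consisting of all simplices with vertex types in J
  (for J a connected component of the diagram this is an irreducible join factor;
   for a union of components it is the join of those factors).\<close>
definition part_pts :: "('s \<Rightarrow> real^'n) \<Rightarrow> 's set \<Rightarrow> ('c \<times> (real^'n)) set" where
  "part_pts \<alpha> J = {(C, x) | C x. fund \<alpha> x \<and> (\<forall>t. t \<notin> J \<longrightarrow> x \<bullet> \<alpha> t = 0)}"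

definition vertex :: "('s \<Rightarrow> real^'n) \<Rightarrow> 'c \<Rightarrow> 's \<Rightarrow> ('c \<times> (real^'n))" where
  "vertex \<alpha> C s = (C, THE x. fund \<alpha> x \<and> (\<forall>t. t \<noteq> s \<longrightarrow> x \<bullet> \<alpha> t = 0))"

definition cox_edge :: "('s \<Rightarrow> 's \<Rightarrow> nat) \<Rightarrow> 's \<Rightarrow> 's \<Rightarrow> bool" where
  "cox_edge m s t \<longleftrightarrow> s \<noteq> t \<and> m s t \<ge> 3"

definition cox_path :: "('s \<Rightarrow> 's \<Rightarrow> nat) \<Rightarrow> 's \<Rightarrow> 's \<Rightarrow> bool" where
  "cox_path m = (cox_edge m)\<^sup>*\<^sup>*"

text \<open>Types belonging to irreducible factors consisting entirely of equatorial points.\<close>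
definition horiz_types ::
  "('s \<Rightarrow> real^'n) \<Rightarrow> ('s \<Rightarrow> 's \<Rightarrow> nat) \<Rightarrow> ('c \<Rightarrow> 'c \<Rightarrow> (real^'n \<Rightarrow> real^'n))
     \<Rightarrow> ('c \<times> (real^'n)) \<Rightarrow> 's set" where
  "horiz_types \<alpha> m \<delta> n =
     \<Union>{ {u. cox_path m s u} | s.
         \<forall>p \<in> (part_pts \<alpha> {u. cox_path m s u} :: ('c \<times> (real^'n)) set). equatorial \<delta> n p}"

definition horizontal_part ::
  "('s \<Rightarrow> real^'n) \<Rightarrow> ('s \<Rightarrow> 's \<Rightarrow> nat) \<Rightarrow> ('c \<Rightarrow> 'c \<Rightarrow> (real^'n \<Rightarrow> real^'n))
     \<Rightarrow> ('c \<times> (real^'n)) \<Rightarrow> ('c \<times> (real^'n)) set" where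
  "horizontal_part \<alpha> m \<delta> n = part_pts \<alpha> (horiz_types \<alpha> m \<delta> n)"

end

theory Submission
  imports Defs
begin

lemma refl_inner:
  assumes "norm a = 1" shows "refl a x \<bullet> refl a y = x \<bullet> y"
proof -
  have aa: "a \<bullet> a = 1" using assms by (simp add: norm_eq_1)
  show ?thesis unfolding refl_def
    by (simp add: inner_diff_left inner_diff_right algebra_simps aa inner_commute)
qed

lemma refl_invol:
  assumes "norm a = 1" shows "refl a (refl a x) = x"
proof -
  have aa: "a \<bullet> a = 1" using assms by (simp add: norm_eq_1)
  show ?thesis unfolding refl_def
    by (simp add: inner_diff_left algebra_simps aa)
qed

lemma linear_refl: "linear (refl a)"
  unfolding refl_def by (auto simp: linear_iff inner_add_left algebra_simps scaleR_add_left)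

lemma wprod_Cons: "wprod \<alpha> (s#ws) = refl (\<alpha> s) \<circ> wprod \<alpha> ws"
  by (simp add: wprod_def)

lemma wprod_Nil: "wprod \<alpha> [] = id"
  by (simp add: wprod_def)

lemma wprod_append: "wprod \<alpha> (ws @ vs) = wprod \<alpha> ws \<circ> wprod \<alpha> vs"
  by (induction ws) (auto simp: wprod_def)

lemma linear_wprod: "linear (wprod \<alpha> ws)"
proof (induction ws)
  case Nil show ?case by (simp add: wprod_Nil id_def bounded_linear.linear[OF bounded_linear_ident])
next
  case (Cons a ws) show ?case unfolding wprod_Cons by (rule linear_compose[OF Cons linear_refl])
qed

lemma wprod_inner:
  assumes "\<forall>s. norm (\<alpha> s) = 1"
  shows "wprod \<alpha> ws x \<bullet> wprod \<alpha> ws y = x \<bullet> y"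
  using assms by (induction ws) (auto simp: wprod_Nil wprod_Cons refl_inner)

lemma wprod_norm:
  assumes "\<forall>s. norm (\<alpha> s) = 1"
  shows "norm (wprod \<alpha> ws x) = norm x"
  using wprod_inner[OF assms, of ws x x] by (simp add: norm_eq_sqrt_inner)

lemma wprod_rev:
  assumes "\<forall>s. norm (\<alpha> s) = 1"
  shows "wprod \<alpha> ws (wprod \<alpha> (rev ws) x) = x"
  using assms
proof (induction ws arbitrary: x)
  case Nil then show ?case by (simp add: wprod_Nil)
next
  case (Cons a ws)
  then show ?case by (simp add: wprod_Cons wprod_append wprod_Nil refl_invol)
qed

lemma perp_all_zero:
  fixes z :: "real^'n::finite"
  assumes "span (range \<alpha>) = UNIV" "\<forall>t. z \<bullet> \<alpha> t = 0"
  shows "z = 0"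
proof -
  have "orthogonal z z"
    by (rule orthogonal_to_span) (use assms in \<open>auto simp: orthogonal_def\<close>)
  then show ?thesis by (simp add: orthogonal_def)
qed

lemma omega_exists:
  fixes \<alpha> :: "'s::finite \<Rightarrow> real^'n::finite"
  assumes "coxeter_roots \<alpha> m"
  shows "\<exists>x. fund \<alpha> x \<and> (\<forall>t. t \<noteq> v \<longrightarrow> x \<bullet> \<alpha> t = 0)"
proof -
  let ?S = "\<alpha> ` (UNIV - {v})"
  obtain y z where y: "y \<in> span ?S" and z: "\<And>w. w \<in> span ?S \<Longrightarrow> orthogonal z w"
      and e: "\<alpha> v = y + z"
    using orthogonal_subspace_decomp_exists[of ?S "\<alpha> v"] by blast
  have inj: "inj \<alpha>" and ind: "independent (range \<alpha>)" using assms by (auto simp: coxeter_roots_def)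
  have SS: "range \<alpha> - {\<alpha> v} = ?S" using inj by (auto simp: inj_eq)
  have "z \<noteq> 0"
  proof
    assume "z = 0"
    then have "\<alpha> v \<in> span (range \<alpha> - {\<alpha> v})" using y e SS by simp
    then show False using ind by (auto simp: dependent_def)
  qed
  have zt: "z \<bullet> \<alpha> t = 0" if "t \<noteq> v" for t
    using z[of "\<alpha> t"] that by (auto simp: orthogonal_def intro: span_base)
  have "z \<bullet> y = 0" using z[OF y] by (simp add: orthogonal_def)
  then have zv: "z \<bullet> \<alpha> v = z \<bullet> z" by (simp add: e inner_add_right)
  have pos: "z \<bullet> z > 0" using \<open>z \<noteq> 0\<close> by simp
  let ?x = "(1 / norm z) *\<^sub>R z"
  have "fund \<alpha> ?x" unfolding fund_def
  proof (intro conjI allI)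
    show "norm ?x = 1" using \<open>z \<noteq> 0\<close> by simp
    fix s
    have "0 \<le> z \<bullet> \<alpha> s" using zt[of s] zv pos by (cases "s = v") auto
    then show "0 \<le> ?x \<bullet> \<alpha> s" by simp
  qed
  moreover have "\<forall>t. t \<noteq> v \<longrightarrow> ?x \<bullet> \<alpha> t = 0" using zt by simp
  ultimately show ?thesis by blast
qed

lemma omega_pos:
  fixes \<alpha> :: "'s::finite \<Rightarrow> real^'n::finite"
  assumes "coxeter_roots \<alpha> m" "fund \<alpha> x" "\<forall>t. t \<noteq> v \<longrightarrow> x \<bullet> \<alpha> t = 0"
  shows "x \<bullet> \<alpha> v > 0"
proof (rule ccontr)
  assume "\<not> ?thesis"
  then have "x \<bullet> \<alpha> v = 0" using assms(2) unfolding fund_def by (meson antisym not_less)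
  then have "\<forall>t. x \<bullet> \<alpha> t = 0" using assms(3) by metis
  then have "x = 0" using perp_all_zero[of \<alpha> x] assms(1) by (auto simp: coxeter_roots_def)
  then show False using assms(2) by (simp add: fund_def)
qed

lemma omega_unique:
  fixes \<alpha> :: "'s::finite \<Rightarrow> real^'n::finite"
  assumes cr: "coxeter_roots \<alpha> m"
    and x: "fund \<alpha> x" "\<forall>t. t \<noteq> v \<longrightarrow> x \<bullet> \<alpha> t = 0"
    and y: "fund \<alpha> y" "\<forall>t. t \<noteq> v \<longrightarrow> y \<bullet> \<alpha> t = 0"
  shows "x = y"
proof -
  define a where "a = x \<bullet> \<alpha> v"
  define b where "b = y \<bullet> \<alpha> v"
  have a: "a > 0" using omega_pos[OF cr x] by (simp add: a_def)
  have b: "b > 0" using omega_pos[OF cr y] by (simp add: b_def)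
  have "\<forall>t. (b *\<^sub>R x - a *\<^sub>R y) \<bullet> \<alpha> t = 0"
  proof
    fix t show "(b *\<^sub>R x - a *\<^sub>R y) \<bullet> \<alpha> t = 0"
      using x(2) y(2) by (cases "t = v") (auto simp: inner_diff_left a_def b_def)
  qed
  then have "b *\<^sub>R x - a *\<^sub>R y = 0" using perp_all_zero[of \<alpha> "b *\<^sub>R x - a *\<^sub>R y"] cr by (auto simp: coxeter_roots_def)
  then have e: "b *\<^sub>R x = a *\<^sub>R y" by simp
  then have "norm (b *\<^sub>R x) = norm (a *\<^sub>R y)" by simp
  then have "b = a" using a b x(1) y(1) by (simp add: fund_def)
  then show ?thesis using e b by simp
qed

definition omg :: "('s \<Rightarrow> real^'n) \<Rightarrow> 's \<Rightarrow> real^'n" where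
  "omg \<alpha> v = (THE x. fund \<alpha> x \<and> (\<forall>t. t \<noteq> v \<longrightarrow> x \<bullet> \<alpha> t = 0))"

lemma omg:
  fixes \<alpha> :: "'s::finite \<Rightarrow> real^'n::finite"
  assumes cr: "coxeter_roots \<alpha> m"
  shows "fund \<alpha> (omg \<alpha> v)" "\<And>t. t \<noteq> v \<Longrightarrow> omg \<alpha> v \<bullet> \<alpha> t = 0"
    "omg \<alpha> v \<bullet> \<alpha> v > 0" "vertex \<alpha> C v = (C, omg \<alpha> v)"
proof -
  have ex1: "\<exists>!x. fund \<alpha> x \<and> (\<forall>t. t \<noteq> v \<longrightarrow> x \<bullet> \<alpha> t = 0)"
    using omega_exists[OF cr, of v] omega_unique[OF cr] by blast
  have P: "fund \<alpha> (omg \<alpha> v) \<and> (\<forall>t. t \<noteq> v \<longrightarrow> omg \<alpha> v \<bullet> \<alpha> t = 0)"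
    unfolding omg_def by (rule theI'[OF ex1])
  then show "fund \<alpha> (omg \<alpha> v)" "\<And>t. t \<noteq> v \<Longrightarrow> omg \<alpha> v \<bullet> \<alpha> t = 0" by auto
  show "omg \<alpha> v \<bullet> \<alpha> v > 0" using omega_pos[OF cr] P by blast
  show "vertex \<alpha> C v = (C, omg \<alpha> v)" by (simp add: vertex_def omg_def)
qed

lemma decomp:
  fixes \<alpha> :: "'s::finite \<Rightarrow> real^'n::finite"
  assumes cr: "coxeter_roots \<alpha> m" and z: "\<forall>t. t \<notin> J \<longrightarrow> z \<bullet> \<alpha> t = 0"
  shows "z = (\<Sum>v\<in>J. (z \<bullet> \<alpha> v / (omg \<alpha> v \<bullet> \<alpha> v)) *\<^sub>R omg \<alpha> v)"
proof -
  let ?s = "(\<Sum>v\<in>J. (z \<bullet> \<alpha> v / (omg \<alpha> v \<bullet> \<alpha> v)) *\<^sub>R omg \<alpha> v)"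
  have "\<forall>t. (z - ?s) \<bullet> \<alpha> t = 0"
  proof
    fix t
    have "?s \<bullet> \<alpha> t = (\<Sum>v\<in>J. (z \<bullet> \<alpha> v / (omg \<alpha> v \<bullet> \<alpha> v)) * (omg \<alpha> v \<bullet> \<alpha> t))"
      by (simp add: inner_sum_left)
    also have "\<dots> = (\<Sum>v\<in>J. if v = t then z \<bullet> \<alpha> t else 0)"
      using omg(2,3)[OF cr] by (intro sum.cong) (auto simp: less_imp_neq[symmetric])
    also have "\<dots> = z \<bullet> \<alpha> t" using z by (simp add: sum.delta')
    finally show "(z - ?s) \<bullet> \<alpha> t = 0" by (simp add: inner_diff_left)
  qed
  then have "z - ?s = 0" using perp_all_zero[of \<alpha> "z - ?s"] cr by (auto simp: coxeter_roots_def)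
  then show ?thesis by simp
qed

lemma cox_path_sym:
  assumes "\<forall>s t. m s t = m t s" "cox_path m a b" shows "cox_path m b a"
  using assms(2) unfolding cox_path_def
proof (induction rule: rtranclp_induct)
  case base then show ?case by simp
next
  case (step y z)
  then have "cox_edge m z y" using assms(1) by (auto simp: cox_edge_def)
  then show ?case using step(3) by (rule converse_rtranclp_into_rtranclp)
qed

lemma cox_path_trans: "cox_path m a b \<Longrightarrow> cox_path m b c \<Longrightarrow> cox_path m a c"
  unfolding cox_path_def by (rule rtranclp_trans)

lemma comp_orth:
  fixes \<alpha> :: "'s::finite \<Rightarrow> real^'n::finite"
  assumes cr: "coxeter_roots \<alpha> m" and "cox_path m r s" "\<not> cox_path m r t"
  shows "\<alpha> s \<bullet> \<alpha> t = 0"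
proof -
  have "s \<noteq> t" using assms by auto
  have "\<not> cox_edge m s t"
  proof
    assume "cox_edge m s t"
    then have "cox_path m r t" using assms(2) unfolding cox_path_def by (simp add: rtranclp.rtrancl_into_rtrancl)
    then show False using assms(3) by simp
  qed
  then have "m s t = 2" using \<open>s \<noteq> t\<close> cr by (auto simp: cox_edge_def coxeter_roots_def)
    (metis le_antisym not_less_eq_eq numeral_2_eq_2 numeral_3_eq_3)
  then show ?thesis using cr by (simp add: coxeter_roots_def)
qed

lemma supp_wprod:
  fixes \<alpha> :: "'s::finite \<Rightarrow> real^'n::finite"
  assumes cr: "coxeter_roots \<alpha> m"
    and z: "\<forall>t. \<not> cox_path m r t \<longrightarrow> z \<bullet> \<alpha> t = 0"
  shows "\<forall>t. \<not> cox_path m r t \<longrightarrow> wprod \<alpha> ws z \<bullet> \<alpha> t = 0"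
proof (induction ws)
  case Nil then show ?case using z by (simp add: wprod_Nil)
next
  case (Cons s ws)
  show ?case
  proof (intro allI impI)
    fix t assume t: "\<not> cox_path m r t"
    let ?y = "wprod \<alpha> ws z"
    have "?y \<bullet> \<alpha> s * (\<alpha> s \<bullet> \<alpha> t) = 0"
    proof (cases "cox_path m r s")
      case True then show ?thesis using comp_orth[OF cr True t] by simp
    next
      case False then show ?thesis using Cons by simp
    qed
    then show "wprod \<alpha> (s # ws) z \<bullet> \<alpha> t = 0"
      using Cons t by (simp add: wprod_Cons refl_def inner_diff_left)
  qed
qed

lemma equatorial_iff:
  fixes \<alpha> :: "'s::finite \<Rightarrow> real^'n::finite"
  assumes cr: "coxeter_roots \<alpha> m" and W: "is_W_building \<alpha> \<delta>"
    and n: "fund \<alpha> (snd n)" and y: "fund \<alpha> y"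
  shows "equatorial \<delta> n (D, y) \<longleftrightarrow> snd n \<bullet> \<delta> (fst n) D y = 0"
proof -
  have "\<delta> (fst n) D \<in> range (wprod \<alpha>)" using W by (auto simp: is_W_building_def Wgrp_def)
  then obtain ws where ws: "\<delta> (fst n) D = wprod \<alpha> ws" by auto
  have un: "\<forall>s. norm (\<alpha> s) = 1" using cr by (simp add: coxeter_roots_def)
  let ?t = "snd n \<bullet> \<delta> (fst n) D y"
  have "\<bar>?t\<bar> \<le> norm (snd n) * norm (\<delta> (fst n) D y)" by (rule Cauchy_Schwarz_ineq2)
  also have "\<dots> = 1" using n y wprod_norm[OF un] ws by (simp add: fund_def)
  finally have b: "-1 \<le> ?t" "?t \<le> 1" by auto
  show ?thesis
  proof
    assume "equatorial \<delta> n (D, y)"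
    then have "arccos ?t = pi/2" by (simp add: equatorial_def angd_def)
    then have "cos (arccos ?t) = 0" by (metis cos_pi_half)
    then show "?t = 0" using b by simp
  qed (simp add: equatorial_def angd_def)
qed

lemma key:
  fixes \<alpha> :: "'s::finite \<Rightarrow> real^'n::finite"
    and \<delta> :: "'c \<Rightarrow> 'c \<Rightarrow> (real^'n \<Rightarrow> real^'n)"
  assumes cr: "coxeter_roots \<alpha> m" and W: "is_W_building \<alpha> \<delta>"
    and n: "fund \<alpha> (snd n)"
    and eq: "\<forall>v. cox_path m r v \<longrightarrow> equatorial \<delta> n (vertex \<alpha> C v)"
  shows "\<forall>p \<in> (part_pts \<alpha> {u. cox_path m r u} :: ('c \<times> (real^'n)) set). equatorial \<delta> n p"
proof
  let ?J = "{u. cox_path m r u}"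
  have un: "\<forall>s. norm (\<alpha> s) = 1" using cr by (simp add: coxeter_roots_def)
  have "\<delta> (fst n) C \<in> range (wprod \<alpha>)" using W by (auto simp: is_W_building_def Wgrp_def)
  then obtain ws where ws: "\<delta> (fst n) C = wprod \<alpha> ws" by auto
  have ov: "snd n \<bullet> wprod \<alpha> ws (omg \<alpha> v) = 0" if "v \<in> ?J" for v
    using eq that equatorial_iff[OF cr W n omg(1)[OF cr, of v], of C] ws by (simp add: omg(4)[OF cr])
  have gen: "snd n \<bullet> wprod \<alpha> ws z = 0" if z: "\<forall>t. \<not> cox_path m r t \<longrightarrow> z \<bullet> \<alpha> t = 0" for z
  proof -
    have zz: "\<forall>t. t \<notin> ?J \<longrightarrow> z \<bullet> \<alpha> t = 0" using z by simp
    have "wprod \<alpha> ws z = (\<Sum>v\<in>?J. (z \<bullet> \<alpha> v / (omg \<alpha> v \<bullet> \<alpha> v)) *\<^sub>R wprod \<alpha> ws (omg \<alpha> v))"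
      apply (subst decomp[OF cr zz])
      using linear_wprod[of \<alpha> ws] by (simp add: linear_sum linear_scale o_def)
    then show ?thesis using ov by (simp add: inner_sum_right)
  qed
  fix p assume "p \<in> (part_pts \<alpha> ?J :: ('c \<times> (real^'n)) set)"
  then obtain D y where p: "p = (D, y)" and y: "fund \<alpha> y" "\<forall>t. t \<notin> ?J \<longrightarrow> y \<bullet> \<alpha> t = 0"
    by (auto simp: part_pts_def)
  have "\<delta> (fst n) D \<in> range (wprod \<alpha>)" using W by (auto simp: is_W_building_def Wgrp_def)
  then obtain ws' where ws': "\<delta> (fst n) D = wprod \<alpha> ws'" by auto
  let ?z = "wprod \<alpha> (rev ws) (wprod \<alpha> ws' y)"
  have "\<forall>t. \<not> cox_path m r t \<longrightarrow> ?z \<bullet> \<alpha> t = 0"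
    by (rule supp_wprod[OF cr], rule supp_wprod[OF cr]) (use y in auto)
  then have "snd n \<bullet> wprod \<alpha> ws ?z = 0" by (rule gen)
  then have "snd n \<bullet> \<delta> (fst n) D y = 0" using wprod_rev[OF un] ws' by simp
  then show "equatorial \<delta> n p" using equatorial_iff[OF cr W n y(1)] p by simp
qed

theorem mainTheorem7:
  fixes \<alpha> :: "'s::finite \<Rightarrow> real^'n::finite"
    and m :: "'s \<Rightarrow> 's \<Rightarrow> nat"
    and \<delta> :: "'c \<Rightarrow> 'c \<Rightarrow> (real^'n \<Rightarrow> real^'n)"
    and n :: "'c \<times> (real^'n)"
    and C :: 'c
    and T :: "'s set"
  assumes "coxeter_roots \<alpha> m"
    and "is_W_building \<alpha> \<delta>"
    and "thick \<alpha> \<delta>"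
    and "fund \<alpha> (snd n)"
  shows "face_pts \<alpha> C T \<subseteq> horizontal_part \<alpha> m \<delta> n \<longleftrightarrow>
         (\<forall>v. (\<exists>t\<in>T. cox_path m v t) \<longrightarrow> equatorial \<delta> n (vertex \<alpha> C v))"
proof
  note cr = assms(1) and W = assms(2) and nn = assms(4)
  have msym: "\<forall>s t. m s t = m t s" using cr by (simp add: coxeter_roots_def)
  let ?H = "horiz_types \<alpha> m \<delta> n"
  {
    assume L: "face_pts \<alpha> C T \<subseteq> horizontal_part \<alpha> m \<delta> n"
    show "\<forall>v. (\<exists>t\<in>T. cox_path m v t) \<longrightarrow> equatorial \<delta> n (vertex \<alpha> C v)"
    proof (intro allI impI)
      fix v assume "\<exists>t\<in>T. cox_path m v t"
      then obtain t where t: "t \<in> T" "cox_path m v t" by blast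
      have "(C, omg \<alpha> t) \<in> face_pts \<alpha> C T"
        using omg(1,2)[OF cr, where v=t] t(1) unfolding face_pts_def by (auto, metis)
      then have "(C, omg \<alpha> t) \<in> part_pts \<alpha> ?H" using L by (auto simp: horizontal_part_def)
      then have "t \<in> ?H" using omg(3)[OF cr, where v=t] by (auto simp: part_pts_def)
      then obtain s where s: "cox_path m s t"
        and hs: "\<forall>p \<in> (part_pts \<alpha> {u. cox_path m s u} :: ('c \<times> (real^'n)) set). equatorial \<delta> n p"
        unfolding horiz_types_def by blast
      have sv: "cox_path m s v" using cox_path_trans[OF s cox_path_sym[OF msym t(2)]] .
      have "vertex \<alpha> C v \<in> (part_pts \<alpha> {u. cox_path m s u} :: ('c \<times> (real^'n)) set)"
        using omg(1,2)[OF cr, where v=v] sv unfolding part_pts_def by (auto simp: omg(4)[OF cr], metis)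
      then show "equatorial \<delta> n (vertex \<alpha> C v)" using hs by blast
    qed
  }
  {
    assume R: "\<forall>v. (\<exists>t\<in>T. cox_path m v t) \<longrightarrow> equatorial \<delta> n (vertex \<alpha> C v)"
    show "face_pts \<alpha> C T \<subseteq> horizontal_part \<alpha> m \<delta> n"
    proof
      fix p assume "p \<in> face_pts \<alpha> C T"
      then obtain y where p: "p = (C, y)" and y: "fund \<alpha> y" "\<forall>t. t \<notin> T \<longrightarrow> y \<bullet> \<alpha> t = 0"
        by (auto simp: face_pts_def)
      have "t \<in> ?H" if "y \<bullet> \<alpha> t \<noteq> 0" for t
      proof -
        have tT: "t \<in> T" using y(2) that by blast
        have "\<forall>v. cox_path m t v \<longrightarrow> equatorial \<delta> n (vertex \<alpha> C v)"
          using R tT cox_path_sym[OF msym] by blast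
        then have "\<forall>p \<in> (part_pts \<alpha> {u. cox_path m t u} :: ('c \<times> (real^'n)) set). equatorial \<delta> n p"
          by (rule key[OF cr W nn])
        moreover have "t \<in> {u. cox_path m t u}" by (simp add: cox_path_def)
        ultimately show ?thesis unfolding horiz_types_def by blast
      qed
      then show "p \<in> horizontal_part \<alpha> m \<delta> n"
        using y p by (auto simp: horizontal_part_def part_pts_def)
    qed
  }
qed

end
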